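(* Let $N,m,d$ be natural numbers with $d\geqslant m+1$, and let $c,C,\varepsilon$ be positive constants. Let $L:\mathbb{R}^d\to\mathbb{R}^m$ be a surjective linear map with $\Vert L\Vert_\infty\leqslant C$ and $\operatorname{dist}(L,V_{\mathrm{rank}}(m,d))\geqslant c$. Let $F:\mathbb{R}^d\to[0,1]$ be supported on $[-N,N]^d$ and $G:\mathbb{R}^m\to[0,1]$ supported on $[-\varepsilon,\varepsilon]^m$. Then $T^L_{F,G,N}(1,\dots,1)\ll_{c,C,\varepsilon}\Vert G\Vert_\infty$.
   Context: Matrices identified with linear maps; $\Vert L\Vert_\infty$ max absolute entry; $\operatorname{dist}$ is $\ell^\infty$ distance on entries; $V_{\mathrm{rank}}(m,d)$ is the set of $m\times d$ real matrices of rank $<m$; $\Vert G\Vert_\infty=\sup|G|$. $T^L_{F,G,N}(1,\dots,1)=N^{-(d-m)}\sum_{\mathbf n\in\mathbb{Z}^d}F(\mathbf n)G(L\mathbf n)$. Implied constants depend on $c,C,\varepsilon,m,d$. *)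

theory Defs
  imports "HOL-Analysis.Analysis"
begin

definition mat_sup_norm :: "real^'d^'m \<Rightarrow> real" where
  "mat_sup_norm A = Max {\<bar>A $ i $ j\<bar> | i j. True}"

definition dist_lowrank :: "real^'d^'m \<Rightarrow> real" where
  "dist_lowrank A = Inf {mat_sup_norm (A - M) | M. rank M < CARD('m)}"

definition lattice :: "(real^'d) set" where
  "lattice = {n. \<forall>i. n $ i \<in> \<int>}"

definition T_form :: "real^'d^'m \<Rightarrow> (real^'d \<Rightarrow> real) \<Rightarrow> (real^'m \<Rightarrow> real) \<Rightarrow> nat \<Rightarrow> real" where
  "T_form L F G N = real N powr (- (real CARD('d) - real CARD('m)))
     * (\<Sum>\<^sub>\<infinity>n\<in>lattice. F n * G (L *v n))"

end

theory Submission
  imports Defs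
begin

lemma msn_fin: "finite {\<bar>A $ i $ j\<bar> | i j. True}" for A :: "real^'d^'m"
proof -
  have "{\<bar>A $ i $ j\<bar> | i j. True} = (\<lambda>(i,j). \<bar>A $ i $ j\<bar>) ` UNIV" by auto
  then show ?thesis by simp
qed

lemma entry_le_msn: "\<bar>A $ i $ j\<bar> \<le> mat_sup_norm A" for A :: "real^'d^'m"
  unfolding mat_sup_norm_def by (rule Max_ge[OF msn_fin]) blast

lemma msn_nonneg: "0 \<le> mat_sup_norm A" for A :: "real^'d^'m"
  using entry_le_msn[of A] abs_ge_zero order_trans by blast

lemma msn_le_norm: "mat_sup_norm A \<le> norm A" for A :: "real^'d^'m"
proof -
  have ne: "{\<bar>A $ i $ j\<bar> | i j. True} \<noteq> {}" by blast
  have "\<bar>A $ i $ j\<bar> \<le> norm A" for i j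
    using Finite_Cartesian_Product.norm_nth_le[of "A $ i" j] Finite_Cartesian_Product.norm_nth_le[of A i] by simp
  then show ?thesis unfolding mat_sup_norm_def
    using Max_le_iff[OF msn_fin ne] by blast
qed

lemma dist_lowrank_le:
  fixes A M :: "real^'d^'m"
  assumes "rank M < CARD('m)"
  shows "dist_lowrank A \<le> mat_sup_norm (A - M)"
  unfolding dist_lowrank_def
proof (rule cInf_lower)
  show "bdd_below {mat_sup_norm (A - M) |M. rank M < CARD('m)}"
    by (rule bdd_belowI[where m=0]) (auto simp: msn_nonneg)
qed (use assms in auto)

lemma det_bound:
  fixes B :: "real^'n^'n"
  assumes "\<And>i j. \<bar>B $ i $ j\<bar> \<le> M"
  shows "\<bar>det B\<bar> \<le> fact CARD('n) * M ^ CARD('n)"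
proof -
  have "\<bar>det B\<bar> \<le> (\<Sum>p\<in>{p. p permutes (UNIV::'n set)}. \<bar>of_int (sign p) * (\<Prod>i\<in>UNIV. B $ i $ p i)\<bar>)"
    unfolding det_def by (rule sum_abs)
  also have "\<dots> \<le> (\<Sum>p\<in>{p. p permutes (UNIV::'n set)}. M ^ CARD('n))"
  proof (rule sum_mono)
    fix p assume "p \<in> {p. p permutes (UNIV::'n set)}"
    have s: "\<bar>of_int (sign p) :: real\<bar> = 1" by (simp add: sign_def)
    have "(\<Prod>i\<in>UNIV. \<bar>B $ i $ p i\<bar>) \<le> (\<Prod>i\<in>(UNIV::'n set). M)"
      by (rule prod_mono) (use assms in auto)
    then show "\<bar>of_int (sign p) * (\<Prod>i\<in>UNIV. B $ i $ p i)\<bar> \<le> M ^ CARD('n)"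
      by (simp add: abs_mult s abs_prod)
  qed
  also have "\<dots> = fact CARD('n) * M ^ CARD('n)"
    by (simp add: card_permutations)
  finally show ?thesis .
qed

lemma cramer_bound:
  fixes A :: "real^'n^'n"
  assumes d: "\<delta> > 0" "\<delta> \<le> \<bar>det A\<bar>" and e: "\<And>i j. \<bar>A $ i $ j\<bar> \<le> C"
    and w: "\<And>i. \<bar>(A *v y) $ i\<bar> \<le> E"
  shows "\<bar>y $ k\<bar> \<le> fact CARD('n) * (max C E) ^ CARD('n) / \<delta>"
proof -
  let ?A' = "(\<chi> i j. if j = k then (A *v y)$i else A$i$j):: real^'n^'n"
  have "\<bar>?A' $ i $ j\<bar> \<le> max C E" for i j
    using e w by (auto simp: le_max_iff_disj)
  then have b: "\<bar>det ?A'\<bar> \<le> fact CARD('n) * (max C E) ^ CARD('n)" by (rule det_bound)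
  have "\<bar>y $ k\<bar> * \<delta> \<le> \<bar>y $ k\<bar> * \<bar>det A\<bar>" using d by (simp add: mult_left_mono)
  also have "\<dots> = \<bar>det ?A'\<bar>" by (simp add: cramer_lemma abs_mult)
  finally show ?thesis using b d by (simp add: pos_le_divide_eq)
qed

definition subm :: "real^'d^'m \<Rightarrow> ('m \<Rightarrow> 'd) \<Rightarrow> real^'m^'m" where
  "subm L \<sigma> = (\<chi> i j. L $ i $ (\<sigma> j))"

lemma full_rank_minor:
  fixes L :: "real^'d^'m"
  assumes "rank L = CARD('m)"
  shows "\<exists>\<sigma>. inj \<sigma> \<and> det (subm L \<sigma>) \<noteq> 0"
proof -
  have dimc: "dim (columns L) = CARD('m)" using assms column_rank_def by metis
  obtain B where B: "B \<subseteq> columns L" "independent B" "card B = dim (columns L)"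
    by (rule basis_exists)
  have "columns L = (\<lambda>j. column j L) ` UNIV" unfolding columns_def by auto
  with B(1) obtain U where U: "inj_on (\<lambda>j. column j L) U" "B = (\<lambda>j. column j L) ` U"
    using subset_image_inj by (metis subset_UNIV)
  have cU: "card U = CARD('m)" using U B(3) dimc card_image by metis
  obtain h where h: "bij_betw h (UNIV::'m set) U"
    using finite_same_card_bij[of "UNIV::'m set" U] cU by auto
  have injh: "inj h" using h bij_betw_imp_inj_on by blast
  have rh: "range h = U" using h bij_betw_imp_surj_on by blast
  have col: "column j (subm L h) = column (h j) L" for j
    by (simp add: column_def subm_def)
  have "columns (subm L h) = (\<lambda>j. column j L) ` range h"
    unfolding columns_def col by auto
  then have "columns (subm L h) = B" using rh U by simp
  then have "rank (subm L h) = CARD('m)"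
    using column_rank_def dim_eq_card_independent B(2,3) dimc by metis
  then have "det (subm L h) \<noteq> 0" using det_eq_0_rank[of "subm L h"] by simp
  with injh show ?thesis by blast
qed

lemma norm_le_entries:
  fixes L :: "real^'d^'m"
  assumes "\<And>i j. \<bar>L $ i $ j\<bar> \<le> C"
  shows "norm L \<le> real CARD('m) * (real CARD('d) * C)"
proof -
  have r: "norm (L $ i) \<le> real CARD('d) * C" for i
  proof -
    have "norm (L $ i) \<le> (\<Sum>j\<in>UNIV. norm (L $ i $ j))"
      unfolding norm_vec_def by (rule L2_set_le_sum) simp
    also have "\<dots> \<le> (\<Sum>j\<in>(UNIV::'d set). C)" by (rule sum_mono) (use assms in auto)
    finally show ?thesis by simp
  qed
  have "norm L \<le> (\<Sum>i\<in>UNIV. norm (L $ i))"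
    unfolding norm_vec_def by (rule L2_set_le_sum) simp
  also have "\<dots> \<le> (\<Sum>i\<in>(UNIV::'m set). real CARD('d) * C)" by (rule sum_mono) (use r in auto)
  finally show ?thesis by simp
qed

lemma compactness_minor:
  fixes c C :: real
  assumes "c > 0"
  shows "\<exists>\<delta>>0. \<forall>L::real^'d^'m. mat_sup_norm L \<le> C \<and> dist_lowrank L \<ge> c \<longrightarrow>
           (\<exists>\<sigma>. inj \<sigma> \<and> \<delta> \<le> \<bar>det (subm L \<sigma>)\<bar>)"
proof (rule ccontr)
  assume "\<not> ?thesis"
  then have "\<forall>k::nat. \<exists>L::real^'d^'m. mat_sup_norm L \<le> C \<and> dist_lowrank L \<ge> c \<and>
           (\<forall>\<sigma>. inj \<sigma> \<longrightarrow> \<bar>det (subm L \<sigma>)\<bar> < inverse (real (Suc k)))"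
    by (metis not_le of_nat_0_less_iff positive_imp_inverse_positive zero_less_Suc)
  from choice[OF this] obtain Ls :: "nat \<Rightarrow> real^'d^'m" where Lsa: "\<forall>k. mat_sup_norm (Ls k) \<le> C \<and> dist_lowrank (Ls k) \<ge> c \<and>
     (\<forall>\<sigma>. inj \<sigma> \<longrightarrow> \<bar>det (subm (Ls k) \<sigma>)\<bar> < inverse (real (Suc k)))"
    by blast
  then have Ls: "\<And>k. mat_sup_norm (Ls k) \<le> C" "\<And>k. dist_lowrank (Ls k) \<ge> c"
     "\<And>k \<sigma>. inj \<sigma> \<Longrightarrow> \<bar>det (subm (Ls k) \<sigma>)\<bar> < inverse (real (Suc k))"
    by auto
  have "bounded (range Ls)"
    unfolding bounded_iff
    using norm_le_entries[of "Ls _" C] entry_le_msn Ls(1) order_trans by blast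
  then obtain l r where r: "strict_mono r" "(Ls \<circ> r) \<longlonglongrightarrow> l"
    using bounded_imp_convergent_subsequence by blast
  have "rank l = CARD('m)"
  proof (rule ccontr)
    assume "rank l \<noteq> CARD('m)"
    then have lr: "rank l < CARD('m)" using rank_bound[of l] by linarith
    from r(2) have "eventually (\<lambda>k. dist ((Ls \<circ> r) k) l < c) sequentially"
      using assms tendsto_iff by blast
    then obtain k where "dist (Ls (r k)) l < c" by (auto simp: eventually_sequentially)
    moreover have "c \<le> dist (Ls (r k)) l"
      using Ls(2)[of "r k"] dist_lowrank_le[OF lr, of "Ls (r k)"] msn_le_norm[of "Ls (r k) - l"]
      by (simp add: dist_norm)
    ultimately show False by simp
  qed
  then obtain \<sigma> where \<sigma>: "inj \<sigma>" "det (subm l \<sigma>) \<noteq> 0" using full_rank_minor by blast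
  have ent: "(\<lambda>k. Ls (r k) $ i $ j) \<longlonglongrightarrow> l $ i $ j" for i j
    using tendsto_vec_nth[OF tendsto_vec_nth[OF r(2)]] by (simp add: o_def)
  have "(\<lambda>k. det (subm (Ls (r k)) \<sigma>)) \<longlonglongrightarrow> det (subm l \<sigma>)"
    unfolding det_def subm_def
    by (simp, intro tendsto_intros ent)
  then have t1: "(\<lambda>k. \<bar>det (subm (Ls (r k)) \<sigma>)\<bar>) \<longlonglongrightarrow> \<bar>det (subm l \<sigma>)\<bar>"
    by (rule tendsto_rabs)
  have "\<bar>det (subm (Ls (r k)) \<sigma>)\<bar> \<le> inverse (real (Suc k))" for k
  proof -
    have "k \<le> r k" using r(1) seq_suble by blast
    then have "inverse (real (Suc (r k))) \<le> inverse (real (Suc k))"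
      by (simp add: le_imp_inverse_le)
    then show ?thesis using Ls(3)[OF \<sigma>(1), of "r k"] by linarith
  qed
  then have "\<bar>det (subm l \<sigma>)\<bar> \<le> 0"
    using LIMSEQ_le[OF t1 LIMSEQ_inverse_real_of_nat] by blast
  with \<sigma>(2) show False by simp
qed

lemma box_count:
  fixes J :: "'d::finite set" and B :: real
  assumes "B \<ge> 0"
  shows "finite {v::real^'d. (\<forall>i. v$i \<in> \<int> \<and> \<bar>v$i\<bar> \<le> B) \<and> (\<forall>i. i \<notin> J \<longrightarrow> v$i = 0)}
     \<and> real (card {v::real^'d. (\<forall>i. v$i \<in> \<int> \<and> \<bar>v$i\<bar> \<le> B) \<and> (\<forall>i. i \<notin> J \<longrightarrow> v$i = 0)})
         \<le> (2*B+1) ^ card J"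
proof -
  define S where "S = {v::real^'d. (\<forall>i. v$i \<in> \<int> \<and> \<bar>v$i\<bar> \<le> B) \<and> (\<forall>i. i \<notin> J \<longrightarrow> v$i = 0)}"
  define f where "f v = restrict (\<lambda>i. \<lfloor>v$i\<rfloor>) J" for v :: "real^'d"
  define T where "T = PiE J (\<lambda>_. {-\<lfloor>B\<rfloor>..\<lfloor>B\<rfloor>})"
  have fT: "finite T" unfolding T_def by (simp add: finite_PiE)
  have sub: "f ` S \<subseteq> T"
  proof
    fix x assume "x \<in> f ` S"
    then obtain v where v: "v \<in> S" "x = f v" by blast
    have "\<lfloor>v$i\<rfloor> \<in> {-\<lfloor>B\<rfloor>..\<lfloor>B\<rfloor>}" for i
    proof -
      from v(1) have "v$i \<in> \<int>" "\<bar>v$i\<bar> \<le> B" unfolding S_def by auto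
      then obtain k where k: "v$i = of_int k" by (auto elim: Ints_cases)
      with \<open>\<bar>v$i\<bar> \<le> B\<close> have "of_int k \<le> B" "of_int (-k) \<le> B" by auto
      then have "k \<le> \<lfloor>B\<rfloor>" "-k \<le> \<lfloor>B\<rfloor>" by (simp_all add: le_floor_iff)
      then show ?thesis using k by simp
    qed
    then show "x \<in> T" unfolding T_def v(2) f_def by auto
  qed
  have inj: "inj_on f S"
  proof (rule inj_onI)
    fix v w assume vw: "v \<in> S" "w \<in> S" "f v = f w"
    show "v = w" unfolding vec_eq_iff
    proof
      fix i show "v$i = w$i"
      proof (cases "i \<in> J")
        case True
        then have "\<lfloor>v$i\<rfloor> = \<lfloor>w$i\<rfloor>" using fun_cong[OF vw(3), of i] unfolding f_def by simp
        moreover have "v$i \<in> \<int>" "w$i \<in> \<int>" using vw unfolding S_def by auto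
        ultimately show ?thesis by (metis of_int_floor)
      next
        case False then show ?thesis using vw unfolding S_def by auto
      qed
    qed
  qed
  have fS: "finite S" using inj_on_finite[OF inj sub fT] .
  have "card S \<le> card T" using card_inj_on_le[OF inj sub fT] .
  also have "card T = (nat (2*\<lfloor>B\<rfloor>+1)) ^ card J"
    unfolding T_def by (simp add: card_PiE)
  finally have "real (card S) \<le> real (nat (2*\<lfloor>B\<rfloor>+1)) ^ card J"
    by (metis of_nat_le_iff of_nat_power)
  also have "\<dots> \<le> (2*B+1) ^ card J"
  proof (rule power_mono)
    have "0 \<le> \<lfloor>B\<rfloor>" using assms by simp
    then have "real (nat (2*\<lfloor>B\<rfloor>+1)) = 2 * real_of_int \<lfloor>B\<rfloor> + 1" by simp
    then show "real (nat (2*\<lfloor>B\<rfloor>+1)) \<le> 2*B+1" using of_int_floor_le[of B] by linarith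
  qed simp
  finally show ?thesis using fS unfolding S_def by blast
qed

lemma main_count:
  fixes L :: "real^'d^'m" and \<sigma> :: "'m \<Rightarrow> 'd" and N R \<epsilon> :: real
  assumes inj: "inj \<sigma>" and R: "R \<ge> 0" and N: "N \<ge> 0"
    and hz: "\<And>z k. (\<forall>i. z$i \<in> \<int>) \<Longrightarrow> (\<forall>i. i \<notin> range \<sigma> \<longrightarrow> z$i = 0) \<Longrightarrow>
                (\<forall>i. \<bar>(L *v z)$i\<bar> \<le> 2*\<epsilon>) \<Longrightarrow> \<bar>z$k\<bar> \<le> R"
  shows "finite {n. (\<forall>i. n$i \<in> \<int> \<and> \<bar>n$i\<bar> \<le> N) \<and> (\<forall>i. \<bar>(L *v n)$i\<bar> \<le> \<epsilon>)}
    \<and> real (card {n. (\<forall>i. n$i \<in> \<int> \<and> \<bar>n$i\<bar> \<le> N) \<and> (\<forall>i. \<bar>(L *v n)$i\<bar> \<le> \<epsilon>)})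
        \<le> (2*N+1)^(CARD('d) - CARD('m)) * (2*R+1)^CARD('m)"
proof -
  define S where "S = {n. (\<forall>i. n$i \<in> \<int> \<and> \<bar>n$i\<bar> \<le> N) \<and> (\<forall>i. \<bar>(L *v n)$i\<bar> \<le> \<epsilon>)}"
  define \<pi> where "\<pi> n = (\<chi> i. if i \<in> range \<sigma> then 0 else n$i)" for n :: "real^'d"
  define BJ where "BJ = {v::real^'d. (\<forall>i. v$i \<in> \<int> \<and> \<bar>v$i\<bar> \<le> N) \<and> (\<forall>i. i \<notin> (- range \<sigma>) \<longrightarrow> v$i = 0)}"
  define BS where "BS = {v::real^'d. (\<forall>i. v$i \<in> \<int> \<and> \<bar>v$i\<bar> \<le> R) \<and> (\<forall>i. i \<notin> range \<sigma> \<longrightarrow> v$i = 0)}"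
  define BU where "BU = {v::real^'d. (\<forall>i. v$i \<in> \<int> \<and> \<bar>v$i\<bar> \<le> N) \<and> (\<forall>i. i \<notin> UNIV \<longrightarrow> v$i = 0)}"
  have BJ: "finite BJ" "real (card BJ) \<le> (2*N+1) ^ card (- range \<sigma>)"
    using box_count[OF N, of "- range \<sigma>"] unfolding BJ_def by auto
  have BS: "finite BS" "real (card BS) \<le> (2*R+1) ^ card (range \<sigma>)"
    using box_count[OF R, of "range \<sigma>"] unfolding BS_def by auto
  have "finite BU" using box_count[OF N, of UNIV] unfolding BU_def by auto
  moreover have "S \<subseteq> BU" unfolding S_def BU_def by auto
  ultimately have fS: "finite S" by (rule finite_subset[rotated])
  have piS: "\<pi> ` S \<subseteq> BJ" unfolding S_def BJ_def \<pi>_def using N by auto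
  have fib: "card {n\<in>S. \<pi> n = p} \<le> card BS" if p: "p \<in> \<pi> ` S" for p
  proof -
    obtain n0 where n0: "n0 \<in> S" "\<pi> n0 = p" using p by blast
    have "{n\<in>S. \<pi> n = p} \<subseteq> (\<lambda>z. n0 + z) ` BS"
    proof
      fix n assume n: "n \<in> {n\<in>S. \<pi> n = p}"
      define z where "z = n - n0"
      have zi: "\<forall>i. z$i \<in> \<int>" using n n0 unfolding z_def S_def by auto
      have z0: "\<forall>i. i \<notin> range \<sigma> \<longrightarrow> z$i = 0"
      proof (intro allI impI)
        fix i assume "i \<notin> range \<sigma>"
        moreover have "\<pi> n $ i = \<pi> n0 $ i" using n n0 by simp
        ultimately show "z$i = 0" unfolding z_def \<pi>_def by simp
      qed
      have zL: "\<forall>i. \<bar>(L *v z)$i\<bar> \<le> 2*\<epsilon>"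
      proof
        fix i
        have "\<bar>(L *v n)$i\<bar> \<le> \<epsilon>" "\<bar>(L *v n0)$i\<bar> \<le> \<epsilon>" using n n0 unfolding S_def by auto
        then show "\<bar>(L *v z)$i\<bar> \<le> 2*\<epsilon>" unfolding z_def matrix_vector_mult_diff_distrib by simp
      qed
      have "z \<in> BS" unfolding BS_def using zi z0 hz[OF zi z0 zL] by simp
      then show "n \<in> (\<lambda>z. n0 + z) ` BS" unfolding z_def by (simp add: image_iff) (metis add.commute diff_add_cancel)
    qed
    then have "card {n\<in>S. \<pi> n = p} \<le> card ((\<lambda>z. n0 + z) ` BS)" by (simp add: BS(1) card_mono)
    also have "\<dots> \<le> card BS" by (rule card_image_le[OF BS(1)])
    finally show ?thesis .
  qed
  have Seq: "S = (\<Union>p\<in>\<pi> ` S. {n\<in>S. \<pi> n = p})" by blast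
  have c1: "card (\<Union>p\<in>\<pi> ` S. {n\<in>S. \<pi> n = p}) \<le> (\<Sum>p\<in>\<pi> ` S. card {n\<in>S. \<pi> n = p})"
    by (rule card_UN_le) (simp add: fS)
  have "card S \<le> (\<Sum>p\<in>\<pi> ` S. card {n\<in>S. \<pi> n = p})"
    using arg_cong[where f=card, OF Seq] c1 by linarith
  also have "\<dots> \<le> card (\<pi> ` S) * card BS"
    using sum_bounded_above[of "\<pi> ` S" "\<lambda>p. card {n\<in>S. \<pi> n = p}" "card BS"] fib by simp
  also have "\<dots> \<le> card BJ * card BS"
    by (simp add: BJ(1) card_mono piS)
  finally have "real (card S) \<le> real (card BJ) * real (card BS)"
    by (metis of_nat_le_iff of_nat_mult)
  also have "\<dots> \<le> (2*N+1) ^ card (- range \<sigma>) * (2*R+1) ^ card (range \<sigma>)"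
    by (rule mult_mono[OF BJ(2) BS(2)]) (use N in auto)
  also have "card (range \<sigma>) = CARD('m)" using inj by (simp add: card_image)
  also have "card (- range \<sigma>) = CARD('d) - CARD('m)"
    using \<open>card (range \<sigma>) = CARD('m)\<close> by (simp add: Compl_eq_Diff_UNIV card_Diff_subset)
  finally show ?thesis using fS unfolding S_def by blast
qed

lemma mv_sub:
  fixes L :: "real^'d^'m" and \<sigma> :: "'m \<Rightarrow> 'd"
  assumes inj: "inj \<sigma>" and z0: "\<forall>i. i \<notin> range \<sigma> \<longrightarrow> z$i = 0"
  shows "L *v z = subm L \<sigma> *v (\<chi> j. z$(\<sigma> j))"
proof -
  have "(\<Sum>j\<in>UNIV. L$i$j * z$j) = (\<Sum>j\<in>UNIV. L$i$(\<sigma> j) * z$(\<sigma> j))" for i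
  proof -
    have "(\<Sum>j\<in>UNIV. L$i$j * z$j) = (\<Sum>j\<in>range \<sigma>. L$i$j * z$j)"
      by (rule sum.mono_neutral_right) (simp_all add: z0)
    also have "\<dots> = (\<Sum>j\<in>UNIV. L$i$(\<sigma> j) * z$(\<sigma> j))"
      using sum.reindex[OF inj, of "\<lambda>j. L$i$j * z$j"] by (simp add: o_def)
    finally show ?thesis .
  qed
  then show ?thesis by (simp add: vec_eq_iff matrix_vector_mult_def subm_def)
qed

theorem lemma3p2:
  fixes c C \<epsilon> :: real
  assumes "CARD('d) \<ge> CARD('m) + 1"
    and "c > 0" and "C > 0" and "\<epsilon> > 0"
  shows "\<exists>K::real. \<forall>(N::nat) (L::real^'d^'m) (F::real^'d \<Rightarrow> real) (G::real^'m \<Rightarrow> real).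
     N \<ge> 1 \<and> surj (\<lambda>x. L *v x) \<and> mat_sup_norm L \<le> C \<and> dist_lowrank L \<ge> c
     \<and> (\<forall>x. 0 \<le> F x \<and> F x \<le> 1) \<and> (\<forall>x. F x \<noteq> 0 \<longrightarrow> (\<forall>i. \<bar>x $ i\<bar> \<le> real N))
     \<and> (\<forall>y. 0 \<le> G y \<and> G y \<le> 1) \<and> (\<forall>y. G y \<noteq> 0 \<longrightarrow> (\<forall>i. \<bar>y $ i\<bar> \<le> \<epsilon>))
     \<longrightarrow> T_form L F G N \<le> K * (SUP y. \<bar>G y\<bar>)"
proof -
  obtain \<delta> where \<delta>: "\<delta> > 0" and hd: "\<And>L::real^'d^'m. mat_sup_norm L \<le> C \<Longrightarrow> dist_lowrank L \<ge> c \<Longrightarrow>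
           (\<exists>\<sigma>. inj \<sigma> \<and> \<delta> \<le> \<bar>det (subm L \<sigma>)\<bar>)"
    using compactness_minor[OF \<open>c > 0\<close>, of C] by blast
  define R where "R = fact CARD('m) * (max C (2*\<epsilon>)) ^ CARD('m) / \<delta>"
  have R0: "R \<ge> 0" unfolding R_def using \<delta> \<open>C > 0\<close> by simp
  define D where "D = CARD('d) - CARD('m)"
  define K where "K = 3 ^ D * (2*R+1) ^ CARD('m)"
  show ?thesis
  proof (rule exI[of _ K], intro allI impI)
    fix N :: nat and L :: "real^'d^'m" and F :: "real^'d \<Rightarrow> real" and G :: "real^'m \<Rightarrow> real"
    assume H: "N \<ge> 1 \<and> surj (\<lambda>x. L *v x) \<and> mat_sup_norm L \<le> C \<and> dist_lowrank L \<ge> c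
     \<and> (\<forall>x. 0 \<le> F x \<and> F x \<le> 1) \<and> (\<forall>x. F x \<noteq> 0 \<longrightarrow> (\<forall>i. \<bar>x $ i\<bar> \<le> real N))
     \<and> (\<forall>y. 0 \<le> G y \<and> G y \<le> 1) \<and> (\<forall>y. G y \<noteq> 0 \<longrightarrow> (\<forall>i. \<bar>y $ i\<bar> \<le> \<epsilon>))"
    from H have HN: "N \<ge> 1" and HC: "mat_sup_norm L \<le> C" and Hc: "dist_lowrank L \<ge> c"
      and HF: "\<And>x. 0 \<le> F x \<and> F x \<le> 1" and HFs: "\<And>x i. F x \<noteq> 0 \<Longrightarrow> \<bar>x $ i\<bar> \<le> real N"
      and HG: "\<And>y. 0 \<le> G y \<and> G y \<le> 1" and HGs: "\<And>y i. G y \<noteq> 0 \<Longrightarrow> \<bar>y $ i\<bar> \<le> \<epsilon>"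
      by blast+
    obtain \<sigma> where \<sigma>: "inj \<sigma>" "\<delta> \<le> \<bar>det (subm L \<sigma>)\<bar>" using hd[OF HC Hc] by blast
    have ent: "\<bar>subm L \<sigma> $ i $ j\<bar> \<le> C" for i j
      using entry_le_msn[of L i "\<sigma> j"] HC by (simp add: subm_def)
    have hz: "\<bar>z$k\<bar> \<le> R" if zi: "\<forall>i. z$i \<in> \<int>" and z0: "\<forall>i. i \<notin> range \<sigma> \<longrightarrow> z$i = 0"
      and zL: "\<forall>i. \<bar>(L *v z)$i\<bar> \<le> 2*\<epsilon>" for z k
    proof -
      have eq: "L *v z = subm L \<sigma> *v (\<chi> j. z$(\<sigma> j))" using mv_sub[OF \<sigma>(1) z0] .
      have yb: "\<bar>(\<chi> j. z$(\<sigma> j)) $ j\<bar> \<le> R" for j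
        unfolding R_def
        by (rule cramer_bound[OF \<delta> \<sigma>(2) ent]) (use zL in \<open>simp add: eq\<close>)
      show ?thesis
      proof (cases "k \<in> range \<sigma>")
        case True
        then obtain j where "k = \<sigma> j" by blast
        then show ?thesis using yb[of j] by simp
      next
        case False then show ?thesis using z0 R0 by simp
      qed
    qed
    define S where "S = {n. (\<forall>i. n$i \<in> \<int> \<and> \<bar>n$i\<bar> \<le> real N) \<and> (\<forall>i. \<bar>(L *v n)$i\<bar> \<le> \<epsilon>)}"
    have N0: "real N \<ge> 0" by simp
    note mc = main_count[OF \<sigma>(1) R0 N0 hz]
    have cnt: "finite S" "real (card S) \<le> (2*real N+1)^D * (2*R+1)^CARD('m)"
      unfolding S_def D_def using mc by blast+
    define sG where "sG = (SUP y. \<bar>G y\<bar>)"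
    have bdd: "bdd_above (range (\<lambda>y. \<bar>G y\<bar>))"
      by (rule bdd_aboveI2[where M=1]) (use HG in auto)
    have Gle: "\<bar>G y\<bar> \<le> sG" for y unfolding sG_def by (rule cSUP_upper[OF _ bdd]) simp
    have sG0: "0 \<le> sG" using Gle[of 0] by linarith
    have "infsum (\<lambda>n. F n * G (L *v n)) lattice = infsum (\<lambda>n. F n * G (L *v n)) S"
    proof (rule infsum_cong_neutral)
      fix x assume "x \<in> S - lattice" then show "F x * G (L *v x) = 0"
        unfolding S_def lattice_def by auto
    next
      fix x assume x: "x \<in> lattice - S"
      show "F x * G (L *v x) = 0"
      proof (rule ccontr)
        assume "F x * G (L *v x) \<noteq> 0"
        then have "F x \<noteq> 0" "G (L *v x) \<noteq> 0" by auto
        then have "x \<in> S" using HFs HGs x unfolding S_def lattice_def by auto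
        with x show False by blast
      qed
    qed simp
    also have "\<dots> = (\<Sum>n\<in>S. F n * G (L *v n))" by (rule infsum_finite[OF cnt(1)])
    also have "\<dots> \<le> (\<Sum>n\<in>S. sG)"
    proof (rule sum_mono)
      fix n
      have "F n * G (L *v n) \<le> 1 * G (L *v n)" using HF HG by (intro mult_right_mono) auto
      also have "\<dots> \<le> sG" using Gle[of "L *v n"] by simp
      finally show "F n * G (L *v n) \<le> sG" .
    qed
    also have "\<dots> = real (card S) * sG" by simp
    also have "\<dots> \<le> (2*real N+1)^D * (2*R+1)^CARD('m) * sG"
      by (rule mult_right_mono[OF cnt(2) sG0])
    also have "\<dots> \<le> (3*real N)^D * (2*R+1)^CARD('m) * sG"
      using HN R0 sG0 by (intro mult_right_mono power_mono) auto
    finally have I: "infsum (\<lambda>n. F n * G (L *v n)) lattice \<le> (3*real N)^D * (2*R+1)^CARD('m) * sG" .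
    have Npos: "real N > 0" using HN by simp
    have P: "real N powr (- (real CARD('d) - real CARD('m))) = inverse (real N ^ D)"
    proof -
      have "- (real CARD('d) - real CARD('m)) = - real D"
        unfolding D_def using assms(1) by (simp add: of_nat_diff)
      then show ?thesis using Npos by (simp add: powr_minus powr_realpow)
    qed
    have "T_form L F G N = inverse (real N ^ D) * infsum (\<lambda>n. F n * G (L *v n)) lattice"
      unfolding T_form_def P ..
    also have "\<dots> \<le> inverse (real N ^ D) * ((3*real N)^D * (2*R+1)^CARD('m) * sG)"
      by (rule mult_left_mono[OF I]) (use Npos in simp)
    also have "\<dots> = K * sG" unfolding K_def using Npos
      by (simp add: power_mult_distrib field_simps)
    finally show "T_form L F G N \<le> K * (SUP y. \<bar>G y\<bar>)" unfolding sG_def .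
  qed
qed

end
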